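(* Let $n \geqslant 14$ be an integer and let $X = \mathrm{A}_n$ or $X = \mathrm{S}_n$. Let $p_{\mathrm{intrans}}(X)$ denote the probability that two elements of $X$, chosen independently and uniformly at random, generate a subgroup contained in some intransitive maximal subgroup of $X$. Then $$p_{\mathrm{intrans}}(X) < \frac{1}{n} + \frac{2.7}{n^2}.$$
   Context: $\mathrm{S}_n$ and $\mathrm{A}_n$ denote the symmetric and alternating groups of degree $n$, acting naturally on $\{1,\dots,n\}$; "intransitive" refers to this natural action. *)

theory Defs
  imports "HOL-Algebra.Sym_Groups" "HOL-Algebra.Generated_Groups" Complex_Main
begin

definition maximal_subgroup :: "('a, 'b) monoid_scheme \<Rightarrow> 'a set \<Rightarrow> bool" where
  "maximal_subgroup G M \<longleftrightarrow> subgroup M G \<and> M \<noteq> carrier G \<and>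
     (\<forall>H. subgroup H G \<and> M \<subseteq> H \<longrightarrow> H = M \<or> H = carrier G)"

definition intransitive :: "nat \<Rightarrow> (nat \<Rightarrow> nat) set \<Rightarrow> bool" where
  "intransitive n H \<longleftrightarrow> \<not> (\<forall>i\<in>{1..n}. \<forall>j\<in>{1..n}. \<exists>h\<in>H. h i = j)"

definition p_intrans :: "nat \<Rightarrow> (nat \<Rightarrow> nat) monoid \<Rightarrow> real" where
  "p_intrans n X =
     real (card {(x, y). x \<in> carrier X \<and> y \<in> carrier X \<and>
        (\<exists>M. maximal_subgroup X M \<and> intransitive n M \<and> generate X {x, y} \<subseteq> M)})
     / (real (card (carrier X)))^2"

end

theory Submission
  imports Defs
begin


lemma invol_card:
  assumes "finite Q" "P \<subseteq> Q" "\<And>p. p\<in>P \<Longrightarrow> g p \<in> Q - P"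
    "\<And>p. p \<in> Q - P \<Longrightarrow> g p \<in> P" "\<And>p. p\<in>Q \<Longrightarrow> g (g p) = p"
  shows "card Q = 2 * card P"
proof -
  have "bij_betw g P (Q - P)"
    by (rule bij_betw_byWitness[where f'=g]) (use assms in auto)
  hence "card (Q - P) = card P" by (simp add: bij_betw_same_card)
  moreover have "card Q = card P + card (Q - P)"
    using assms(1,2) by (metis card_Diff_subset card_mono finite_subset le_add_diff_inverse)
  ultimately show ?thesis by simp
qed

lemma stab_sym_card:
  assumes "finite S" "A \<subseteq> S"
  shows "card {p. p permutes S \<and> p ` A = A} = fact (card A) * fact (card S - card A)"
proof -
  let ?f = "\<lambda>(q,r). q \<circ> r"
  let ?D = "{q. q permutes A} \<times> {r. r permutes S - A}"
  have eq: "{p. p permutes S \<and> p ` A = A} = ?f ` ?D"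
  proof
    show "?f ` ?D \<subseteq> {p. p permutes S \<and> p ` A = A}"
    proof
      fix x assume "x \<in> ?f ` ?D"
      then obtain q r where x: "x = q \<circ> r" and q: "q permutes A" and r: "r permutes S - A" by auto
      have "q permutes S" using q assms(2) permutes_subset by blast
      moreover have "r permutes S" using r permutes_subset by blast
      ultimately have "q \<circ> r permutes S" by (simp add: permutes_compose)
      moreover have "r ` A = A" using r by (force simp: permutes_not_in)
      hence "(q \<circ> r) ` A = A" using permutes_image[OF q] by (metis image_comp)
      ultimately show "x \<in> {p. p permutes S \<and> p ` A = A}" using x by simp
    qed
  next
    show "{p. p permutes S \<and> p ` A = A} \<subseteq> ?f ` ?D"
    proof clarify
      fix p assume p: "p permutes S" and pA: "p ` A = A"
      define q where "q = (\<lambda>z. if z \<in> A then p z else z)"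
      define r where "r = (\<lambda>z. if z \<in> A then z else p z)"
      have inj: "inj p" using p permutes_inj by blast
      have notA: "z \<notin> A \<Longrightarrow> p z \<notin> A" for z
        using pA inj by (metis imageE injD)
      have "bij_betw p A A" using pA inj by (simp add: bij_betw_def inj_on_subset[OF inj subset_UNIV])
      hence "bij_betw q A A" by (rule bij_betw_cong[THEN iffD1, rotated]) (simp add: q_def)
      hence q1: "q permutes A" unfolding permutes_altdef by (auto simp: q_def)
      have pS: "p ` (S - A) = S - A" using p pA inj by (simp add: image_set_diff permutes_image)
      have "bij_betw p (S - A) (S - A)" using pS inj by (simp add: bij_betw_def inj_on_subset[OF inj subset_UNIV])
      hence "bij_betw r (S - A) (S - A)" by (rule bij_betw_cong[THEN iffD1, rotated]) (simp add: r_def)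
      hence r1: "r permutes S - A" unfolding permutes_altdef
        using p by (auto simp: r_def) (meson permutes_not_in)
      have "p = q \<circ> r" by (rule ext) (auto simp: q_def r_def notA)
      thus "p \<in> ?f ` ?D" using q1 r1 by force
    qed
  qed
  have inj: "inj_on ?f ?D"
  proof (rule inj_onI, clarify)
    fix q r q' r' assume q: "q permutes A" and r: "r permutes S - A"
      and q': "q' permutes A" and r': "r' permutes S - A" and e: "q \<circ> r = q' \<circ> r'"
    have e': "q (r z) = q' (r' z)" for z using e by (metis comp_apply)
    have qq: "q = q'"
    proof
      fix z show "q z = q' z"
      proof (cases "z \<in> A")
        case True
        then show ?thesis using e'[of z] r r' by (simp add: permutes_not_in)
      next
        case False
        then show ?thesis using q q' by (simp add: permutes_not_in)
      qed
    qed
    have "r = r'"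
    proof
      fix z show "r z = r' z"
      proof (cases "z \<in> S - A")
        case True
        hence "r z \<in> S - A" "r' z \<in> S - A" using r r' by (meson permutes_in_image)+
        then show ?thesis using e'[of z] q q' by (simp add: permutes_not_in)
      next
        case False
        then show ?thesis using r r' by (simp add: permutes_not_in)
      qed
    qed
    with qq show "q = q' \<and> r = r'" by simp
  qed
  have fA: "finite A" using assms finite_subset by blast
  have "card {p. p permutes S \<and> p ` A = A} = card ?D" using eq inj by (simp add: card_image)
  also have "\<dots> = fact (card A) * fact (card (S - A))"
    using assms fA by (simp add: card_cartesian_product card_permutations)
  also have "card (S - A) = card S - card A" using assms fA by (simp add: card_Diff_subset)
  finally show ?thesis .
qed

definition XC :: "bool \<Rightarrow> nat \<Rightarrow> (nat \<Rightarrow> nat) set" where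
  "XC b n = {p. p permutes {1..n} \<and> (b \<longrightarrow> evenperm p)}"
definition Stab :: "bool \<Rightarrow> nat \<Rightarrow> nat set \<Rightarrow> (nat \<Rightarrow> nat) set" where
  "Stab b n A = {p \<in> XC b n. p ` A = A}"
definition Fixs :: "bool \<Rightarrow> nat \<Rightarrow> nat set \<Rightarrow> (nat \<Rightarrow> nat) set" where
  "Fixs b n A = {p \<in> XC b n. \<forall>a\<in>A. p a = a}"

lemma two_elems:
  assumes "2 \<le> card B"
  obtains c d where "c \<in> B" "d \<in> B" "c \<noteq> d"
proof -
  have "B \<noteq> {}" using assms by auto
  then obtain c where c: "c \<in> B" by auto
  have "card (B - {c}) \<ge> 1" using assms c
    using card_Diff_singleton[OF c] by simp
  hence "B - {c} \<noteq> {}" by (metis card.empty not_one_le_zero)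
  then obtain d where "d \<in> B - {c}" by auto
  thus ?thesis using c that by auto
qed

lemma stab_even:
  assumes "finite S" "A \<subseteq> S" "c \<in> S - A" "d \<in> S - A" "c \<noteq> d"
  shows "card {p. p permutes S \<and> p ` A = A} = 2 * card {p. p permutes S \<and> p ` A = A \<and> evenperm p}"
proof -
  let ?Q = "{p. p permutes S \<and> p ` A = A}"
  let ?P = "{p. p permutes S \<and> p ` A = A \<and> evenperm p}"
  let ?g = "\<lambda>p. p \<circ> transpose c d"
  have fQ: "finite ?Q" by (rule finite_subset[OF _ finite_permutations[OF assms(1)]]) blast
  have t: "transpose c d permutes S" using assms by (simp add: permutes_swap_id)
  have tA1: "a \<in> A \<Longrightarrow> transpose c d a = a" for a using assms(3,4) by (auto simp: transpose_def)
  have "transpose c d ` A = id ` A" by (rule image_cong) (auto simp: tA1)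
  hence tA: "transpose c d ` A = A" by simp
  have pc: "p permutes S \<Longrightarrow> p ` A = A \<Longrightarrow> (p \<circ> transpose c d) permutes S \<and> (p \<circ> transpose c d) ` A = A" for p
    using t tA by (metis permutes_compose image_comp)
  have ev: "p permutes S \<Longrightarrow> evenperm (p \<circ> transpose c d) = (\<not> evenperm p)" for p
  proof -
    assume "p permutes S"
    hence "permutation p" using assms(1) permutation_permutes by blast
    thus ?thesis using assms(5) by (simp add: evenperm_comp permutation_swap_id evenperm_swap)
  qed
  have g2: "?g (?g p) = p" for p by (simp add: o_assoc[symmetric])
  have PQ: "?P \<subseteq> ?Q" by blast
  have h1: "p \<in> ?P \<Longrightarrow> ?g p \<in> ?Q - ?P" for p using pc ev by auto
  have h2: "p \<in> ?Q - ?P \<Longrightarrow> ?g p \<in> ?P" for p using pc ev by auto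
  show ?thesis using invol_card[of ?Q ?P ?g, OF fQ PQ h1 h2 g2] .
qed

lemma card_XC_True:
  assumes "n \<ge> 2" shows "2 * card (XC True n) = fact n"
proof -
  have "XC True n = carrier (alt_group n)" by (auto simp: XC_def alt_group_carrier)
  thus ?thesis using alt_group_card_carrier[OF assms] by simp
qed

lemma card_XC_False: "card (XC False n) = fact n"
proof -
  have "XC False n = carrier (sym_group n)" by (auto simp: XC_def sym_group_carrier)
  thus ?thesis using sym_group_card_carrier by simp
qed

lemma stab_ratio:
  assumes "A \<subseteq> {1..n}" "card A + 2 \<le> n"
  shows "real (card (Stab b n A)) * real (n choose card A) = real (card (XC b n))"
proof -
  have cS: "card ({1..n} - A) \<ge> 2" using assms by (simp add: card_Diff_subset finite_subset)
  then obtain c d where cd: "c \<in> {1..n} - A" "d \<in> {1..n} - A" "c \<noteq> d" by (rule two_elems)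
  have sf: "card {p. p permutes {1..n} \<and> p ` A = A} = fact (card A) * fact (n - card A)"
    using stab_sym_card[of "{1..n}" A] assms by simp
  have bf: "fact (card A) * fact (n - card A) * (n choose card A) = fact n"
    using assms by (intro binomial_fact_lemma) simp
  show ?thesis
  proof (cases b)
    case True
    have "Stab b n A = {p. p permutes {1..n} \<and> p ` A = A \<and> evenperm p}"
      using True by (auto simp: Stab_def XC_def)
    hence "2 * card (Stab b n A) = fact (card A) * fact (n - card A)"
      using stab_even[of "{1..n}" A c d] assms cd sf by simp
    moreover have "2 * card (XC b n) = fact n" using True card_XC_True assms by simp
    ultimately have "real (2 * card (Stab b n A)) * real (n choose card A) = real (2 * card (XC b n))"
      using bf by (metis of_nat_mult of_nat_fact)
    thus ?thesis by simp
  next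
    case False
    have "Stab b n A = {p. p permutes {1..n} \<and> p ` A = A}"
      using False by (auto simp: Stab_def XC_def)
    hence "card (Stab b n A) = fact (card A) * fact (n - card A)" using sf by simp
    moreover have "card (XC b n) = fact n" using False card_XC_False by simp
    ultimately show ?thesis using bf by (metis of_nat_mult of_nat_fact)
  qed
qed

lemma fix_half:
  assumes "A = {a1, a2}" "a1 \<noteq> a2" "A \<subseteq> {1..n}" "card A + 2 \<le> n"
  shows "card (Stab b n A) = 2 * card (Fixs b n A)"
proof -
  have cS: "card ({1..n} - A) \<ge> 2" using assms by (simp add: card_Diff_subset finite_subset)
  then obtain c d where cd: "c \<in> {1..n} - A" "d \<in> {1..n} - A" "c \<noteq> d" by (rule two_elems)
  define \<sigma> where "\<sigma> = transpose a1 a2 \<circ> transpose c d"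
  have a12: "a1 \<in> {1..n}" "a2 \<in> {1..n}" using assms by auto
  have cdA: "c \<noteq> a1" "c \<noteq> a2" "d \<noteq> a1" "d \<noteq> a2" using cd assms(1) by auto
  have sp: "\<sigma> permutes {1..n}" unfolding \<sigma>_def using a12 cd
    by (intro permutes_compose permutes_swap_id) auto
  have sperm: "permutation \<sigma>" using sp permutation_permutes by blast
  have sev: "evenperm \<sigma>" unfolding \<sigma>_def using assms(2) cd
    by (simp add: evenperm_comp permutation_swap_id evenperm_swap)
  have s1: "\<sigma> a1 = a2" "\<sigma> a2 = a1" unfolding \<sigma>_def using cdA by (auto simp: transpose_def)
  have ss: "\<sigma> (\<sigma> z) = z" for z unfolding \<sigma>_def using cdA assms(2) cd(3)
    by (auto simp: transpose_def)
  let ?g = "\<lambda>p. p \<circ> \<sigma>"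
  have gX: "p \<in> XC b n \<Longrightarrow> ?g p \<in> XC b n" for p
  proof -
    assume p: "p \<in> XC b n"
    hence pp: "p permutes {1..n}" by (simp add: XC_def)
    hence "permutation p" using permutation_permutes by blast
    hence "evenperm (p \<circ> \<sigma>) = evenperm p" using sperm sev by (simp add: evenperm_comp)
    thus ?thesis using p sp by (simp add: XC_def permutes_compose)
  qed
  have fQ: "finite (Stab b n A)"
    by (rule finite_subset[OF _ finite_permutations[of "{1..n}"]]) (auto simp: Stab_def XC_def)
  have PQ: "Fixs b n A \<subseteq> Stab b n A"
  proof
    fix p assume "p \<in> Fixs b n A"
    hence "p \<in> XC b n" "p a1 = a1" "p a2 = a2" using assms(1) by (auto simp: Fixs_def)
    thus "p \<in> Stab b n A" using assms(1) by (simp add: Stab_def)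
  qed
  have h1: "?g p \<in> Stab b n A - Fixs b n A" if "p \<in> Fixs b n A" for p
  proof -
    have "p \<in> XC b n" "p a1 = a1" "p a2 = a2" using that assms(1) by (auto simp: Fixs_def)
    thus ?thesis using gX s1 assms(1,2) by (auto simp: Stab_def Fixs_def)
  qed
  have h2: "?g p \<in> Fixs b n A" if "p \<in> Stab b n A - Fixs b n A" for p
  proof -
    have p: "p \<in> XC b n" "p ` {a1, a2} = {a1, a2}" "\<not> (p a1 = a1 \<and> p a2 = a2)"
      using that assms(1) by (auto simp: Stab_def Fixs_def)
    have "inj p" using p(1) permutes_inj by (auto simp: XC_def)
    hence "p a1 = a2 \<and> p a2 = a1" using p(2,3) assms(2) by (auto dest: injD)
    thus ?thesis using gX[OF p(1)] s1 assms(1) by (auto simp: Fixs_def)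
  qed
  have g2: "?g (?g p) = p" for p using ss by (auto simp: fun_eq_iff)
  show ?thesis using invol_card[of "Stab b n A" "Fixs b n A" ?g, OF fQ PQ h1 h2 g2] .
qed




lemma X_props:
  fixes X :: "(nat \<Rightarrow> nat) monoid"
  assumes "X = alt_group n \<or> X = sym_group n"
  shows "group X" "\<And>p q. p \<otimes>\<^bsub>X\<^esub> q = p \<circ> q" "\<one>\<^bsub>X\<^esub> = id"
    "\<And>p. p \<in> carrier X \<Longrightarrow> inv\<^bsub>X\<^esub> p = inv' p" "\<exists>b. carrier X = XC b n"
proof -
  show "group X" using assms alt_group_is_group sym_group_is_group by auto
  show "\<And>p q. p \<otimes>\<^bsub>X\<^esub> q = p \<circ> q" using assms alt_group_mult sym_group_mult by auto
  show "\<one>\<^bsub>X\<^esub> = id" using assms alt_group_one sym_group_one by auto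
  show "\<And>p. p \<in> carrier X \<Longrightarrow> inv\<^bsub>X\<^esub> p = inv' p"
    using assms alt_group_inv_equality sym_group_inv_equality by auto
  show "\<exists>b. carrier X = XC b n"
  proof (cases "X = alt_group n")
    case True
    hence "carrier X = XC True n" by (auto simp: XC_def alt_group_carrier)
    thus ?thesis by blast
  next
    case False
    hence "carrier X = XC False n" using assms by (auto simp: XC_def sym_group_carrier)
    thus ?thesis by blast
  qed
qed

lemma perm_compl_inv:
  assumes "m permutes S" "T \<subseteq> S" "finite S" "m ` T \<subseteq> T"
  shows "m ` T = T" "m ` (S - T) = S - T"
proof -
  have inj: "inj m" using assms(1) permutes_inj by blast
  show mT: "m ` T = T"
    using endo_inj_surj[of T m] assms inj finite_subset inj_on_subset[OF inj subset_UNIV] by blast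
  show "m ` (S - T) = S - T" using image_set_diff[OF inj] mT permutes_image[OF assms(1)] by simp
qed

lemma XC_perm: "p \<in> XC b n \<Longrightarrow> p permutes {1..n}" by (simp add: XC_def)

lemma half_not_maximal:
  fixes X :: "(nat \<Rightarrow> nat) monoid"
  assumes X: "X = alt_group n \<or> X = sym_group n"
    and M: "maximal_subgroup X M"
    and T: "T \<subseteq> {1..n}" "\<forall>m\<in>M. m ` T \<subseteq> T"
    and card: "card T = card ({1..n} - T)" "card T \<ge> 2"
  shows False
proof -
  obtain b where cX: "carrier X = XC b n" using X_props(5)[OF X] by blast
  note mX = X_props(2)[OF X] and oX = X_props(3)[OF X] and iX = X_props(4)[OF X]
  interpret G: group X using X_props(1)[OF X] .
  define C where "C = {1..n} - T"
  have fO: "finite T" using T(1) finite_subset by blast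
  have fC: "finite C" by (simp add: C_def)
  have OC: "T \<inter> C = {}" "T \<union> C = {1..n}" using T(1) by (auto simp: C_def)
  have cC: "card C = card T" using card by (simp add: C_def)
  have subM: "subgroup M X" using M by (simp add: maximal_subgroup_def)
  have Mc: "M \<subseteq> carrier X" using subM subgroup.subset by blast
  define W where "W = {p \<in> carrier X. p ` T = T \<or> p ` T = C}"
  have pC: "p \<in> carrier X \<Longrightarrow> p ` C = {1..n} - p ` T" for p
  proof -
    assume "p \<in> carrier X"
    hence pp: "p permutes {1..n}" using cX XC_perm by blast
    show ?thesis unfolding C_def using image_set_diff[OF permutes_inj[OF pp]] permutes_image[OF pp] by simp
  qed
  have CO: "{1..n} - C = T" using T(1) by (auto simp: C_def)
  have "subgroup W X"
  proof (rule G.subgroupI)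
    show "W \<subseteq> carrier X" by (auto simp: W_def)
    show "W \<noteq> {}" using G.one_closed oX by (auto simp: W_def)
  next
    fix a assume a: "a \<in> W"
    hence ac: "a \<in> carrier X" by (simp add: W_def)
    have ip: "inv' a \<in> carrier X" using G.inv_closed[OF ac] iX[OF ac] by simp
    have inj: "inj a" using ac cX XC_perm permutes_inj by blast
    have "inv' a ` T = T \<or> inv' a ` T = C"
    proof (cases "a ` T = T")
      case True
      then show ?thesis using image_inv_f_f[OF inj, of T] by simp
    next
      case False
      hence aO: "a ` T = C" using a by (simp add: W_def)
      hence "inv' a ` C = T" using image_inv_f_f[OF inj, of T] by simp
      moreover have "inv' a ` C = {1..n} - inv' a ` T" using pC[OF ip] .
      ultimately have "inv' a ` T = {1..n} - T"
        using T(1) permutes_image[OF XC_perm[OF ip[unfolded cX]]]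
        by (metis Diff_Diff_Int image_mono inf.absorb_iff2 Diff_subset)
      thus ?thesis by (simp add: C_def)
    qed
    thus "inv\<^bsub>X\<^esub> a \<in> W" using iX[OF ac] ip by (simp add: W_def)
  next
    fix a c assume a: "a \<in> W" and c: "c \<in> W"
    have ac: "a \<in> carrier X" "c \<in> carrier X" using a c by (auto simp: W_def)
    have e: "(a \<circ> c) ` T = a ` (c ` T)" by (simp add: image_comp)
    have aW: "a ` T = T \<or> a ` T = C" and cW: "c ` T = T \<or> c ` T = C" using a c by (auto simp: W_def)
    have "(a \<circ> c) ` T = T \<or> (a \<circ> c) ` T = C"
    proof (cases "c ` T = T")
      case True
      then show ?thesis using e aW by simp
    next
      case False
      hence "c ` T = C" using cW by simp
      hence "(a \<circ> c) ` T = {1..n} - a ` T" using e pC[OF ac(1)] by simp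
      then show ?thesis using aW CO by (auto simp: C_def)
    qed
    thus "a \<otimes>\<^bsub>X\<^esub> c \<in> W" using G.m_closed[OF ac] mX by (simp add: W_def)
  qed
  have MW: "M \<subseteq> W"
  proof
    fix m assume m: "m \<in> M"
    hence "m \<in> carrier X" using Mc by blast
    hence "m ` T = T" using perm_compl_inv(1)[of m "{1..n}" T] T m cX XC_perm by blast
    thus "m \<in> W" using m Mc by (auto simp: W_def)
  qed
  obtain a1 a2 where a12: "a1 \<in> T" "a2 \<in> T" "a1 \<noteq> a2" using card(2) by (rule two_elems)
  have "C \<noteq> {}" using cC card(2) by auto
  then obtain c0 where c0: "c0 \<in> C" by blast
  obtain g where g: "bij_betw g T C" using finite_same_card_bij[OF fO fC cC[symmetric]] by blast
  define s0 where "s0 = (\<lambda>z. if z \<in> T then g z else if z \<in> C then inv_into T g z else z)"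
  have "bij_betw (\<lambda>x. if x \<in> T then g x else inv_into T g x) (T \<union> C) (C \<union> T)"
    using g bij_betw_inv_into[OF g] OC(1) by (intro bij_betw_disjoint_Un) auto
  hence b1: "bij_betw (\<lambda>x. if x \<in> T then g x else inv_into T g x) {1..n} {1..n}"
    using OC(2) by (simp add: Un_commute)
  have "bij_betw s0 {1..n} {1..n}"
    by (rule bij_betw_cong[THEN iffD1, OF _ b1]) (auto simp: s0_def C_def)
  moreover have "{x. s0 x \<noteq> x} \<subseteq> {1..n}" using OC(2) by (auto simp: s0_def)
  ultimately have s0p: "s0 permutes {1..n}" by (simp add: permutes_altdef)
  have "s0 ` T = g ` T" by (rule image_cong) (auto simp: s0_def)
  hence s0O: "s0 ` T = C" using g by (simp add: bij_betw_def)
  define t where "t = transpose a1 a2"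
  have tp: "t permutes {1..n}" using a12 T(1) by (auto simp: t_def intro!: permutes_swap_id)
  have tO: "t ` T = T" using a12 unfolding t_def by (intro permutes_image permutes_swap_id)
  define s where "s = (if evenperm s0 then s0 else s0 \<circ> t)"
  have sp: "s permutes {1..n}" using s0p tp by (simp add: s_def permutes_compose)
  have sev: "evenperm s"
  proof -
    have "permutation s0" using s0p finite_atLeastAtMost permutation_permutes by blast
    thus ?thesis using a12(3) by (auto simp: s_def t_def evenperm_comp permutation_swap_id evenperm_swap)
  qed
  have sO: "s ` T = C"
  proof (cases "evenperm s0")
    case True
    then show ?thesis using s0O by (simp add: s_def)
  next
    case False
    hence "s ` T = s0 ` (t ` T)" by (simp add: s_def image_comp)
    then show ?thesis using s0O tO by simp
  qed
  have sX: "s \<in> carrier X" using cX sp sev by (simp add: XC_def)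
  have sW: "s \<in> W" using sX sO by (simp add: W_def)
  have sM: "s \<notin> M"
  proof
    assume "s \<in> M"
    hence "C \<subseteq> T" using T(2) sO by auto
    thus False using c0 OC(1) by auto
  qed
  define r where "r = transpose a1 c0 \<circ> transpose a1 a2"
  have c0n: "c0 \<in> {1..n}" using c0 by (simp add: C_def)
  have c0O: "c0 \<notin> T" using c0 by (simp add: C_def)
  have a1c: "a1 \<noteq> c0" "a2 \<noteq> c0" using c0O a12 by auto
  have rp: "r permutes {1..n}" using a12 T(1) c0n
    by (auto simp: r_def intro!: permutes_compose permutes_swap_id)
  have rev: "evenperm r" using a12(3) a1c
    by (simp add: r_def evenperm_comp permutation_swap_id evenperm_swap)
  have rX: "r \<in> carrier X" using cX rp rev by (simp add: XC_def)
  have "r a2 = c0" using a12(3) a1c by (simp add: r_def)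
  hence "c0 \<in> r ` T" using a12 by (metis imageI)
  hence r1: "r ` T \<noteq> T" using c0O by auto
  have "r a1 = a2" using a12(3) a1c by (simp add: r_def)
  hence "a2 \<in> r ` T" using a12 by (metis imageI)
  hence r2: "r ` T \<noteq> C" using a12 by (auto simp: C_def)
  have "r \<notin> W" using r1 r2 by (simp add: W_def)
  have "W = M \<or> W = carrier X" using M \<open>subgroup W X\<close> MW by (simp add: maximal_subgroup_def)
  thus False using sW sM rX \<open>r \<notin> W\<close> by auto
qed




lemma invariant_small:
  fixes X :: "(nat \<Rightarrow> nat) monoid"
  assumes X: "X = alt_group n \<or> X = sym_group n"
    and M: "maximal_subgroup X M" "intransitive n M" and n3: "n \<ge> 3"
  shows "\<exists>B. B \<subseteq> {1..n} \<and> B \<noteq> {} \<and> 2 * card B < n \<and> (\<forall>m\<in>M. m ` B \<subseteq> B)"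
proof -
  obtain b where cX: "carrier X = XC b n" using X_props(5)[OF X] by blast
  note mX = X_props(2)[OF X] and oX = X_props(3)[OF X]
  have subM: "subgroup M X" using M by (simp add: maximal_subgroup_def)
  have Mc: "M \<subseteq> carrier X" using subM subgroup.subset by blast
  have Mp: "m permutes {1..n}" if "m \<in> M" for m
  proof -
    have "m \<in> XC b n" using Mc cX that by auto
    thus ?thesis by (rule XC_perm)
  qed
  obtain i j where ij: "i \<in> {1..n}" "j \<in> {1..n}" "\<forall>h\<in>M. h i \<noteq> j"
    using M(2) by (auto simp: intransitive_def)
  define T where "T = (\<lambda>m. m i) ` M"
  have Tn: "T \<subseteq> {1..n}"
  proof
    fix z assume "z \<in> T"
    then obtain m where m: "m \<in> M" "z = m i" by (auto simp: T_def)
    thus "z \<in> {1..n}" using permutes_in_image[OF Mp[OF m(1)]] ij(1) by simp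
  qed
  have "id \<in> M" using subgroup.one_closed[OF subM] oX by simp
  hence iT: "i \<in> T" unfolding T_def by (metis id_apply imageI)
  have jT: "j \<notin> T" using ij(3) by (auto simp: T_def)
  have TM: "\<forall>m\<in>M. m ` T \<subseteq> T"
  proof (intro ballI subsetI)
    fix m z assume m: "m \<in> M" and z: "z \<in> m ` T"
    then obtain m' where m': "m' \<in> M" "z = m (m' i)" by (auto simp: T_def)
    have "m \<otimes>\<^bsub>X\<^esub> m' \<in> M" using subgroup.m_closed[OF subM m m'(1)] .
    hence "m \<circ> m' \<in> M" using mX by simp
    hence "(m \<circ> m') i \<in> T" unfolding T_def by (rule imageI)
    thus "z \<in> T" using m' by simp
  qed
  define C where "C = {1..n} - T"
  have CM: "\<forall>m\<in>M. m ` C \<subseteq> C"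
    unfolding C_def using perm_compl_inv(2)[OF Mp Tn finite_atLeastAtMost] TM by blast
  have jC: "j \<in> C" using ij jT by (simp add: C_def)
  have fT: "finite T" using Tn finite_subset by blast
  have "card C = card {1..n} - card T" unfolding C_def using card_Diff_subset[OF fT Tn] .
  hence cTC: "card T + card C = n" using card_mono[OF _ Tn] by simp
  have cT1: "card T \<ge> 1" using iT fT by (auto simp: Suc_le_eq card_gt_0_iff)
  show ?thesis
  proof (cases "card T \<ge> 2 \<and> card T = card C")
    case True
    hence False using half_not_maximal[OF X M(1) Tn TM] by (simp add: C_def)
    thus ?thesis ..
  next
    case False
    show ?thesis
    proof (cases "2 * card T < n")
      case True
      thus ?thesis using Tn iT TM by (intro exI[of _ T]) auto
    next
      case False2: False
      hence "2 * card C < n" using False cTC cT1 n3 by auto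
      moreover have "C \<subseteq> {1..n}" by (simp add: C_def)
      ultimately show ?thesis using jC CM by (intro exI[of _ C]) auto
    qed
  qed
qed

lemma orbit_set:
  fixes X :: "(nat \<Rightarrow> nat) monoid"
  assumes X: "X = alt_group n \<or> X = sym_group n"
    and M: "maximal_subgroup X M" "intransitive n M" and n3: "n \<ge> 3"
    and xy: "x \<in> carrier X" "y \<in> carrier X" "generate X {x, y} \<subseteq> M"
  shows "\<exists>A. A \<subseteq> {1..n} \<and> A \<noteq> {} \<and> 2 * card A < n \<and> x ` A = A \<and> y ` A = A \<and>
           (2 \<le> card A \<longrightarrow> \<not> (\<forall>a\<in>A. x a = a \<and> y a = a))"
proof -
  obtain B where B: "B \<subseteq> {1..n}" "B \<noteq> {}" "2 * card B < n" "\<forall>m\<in>M. m ` B \<subseteq> B"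
    using invariant_small[OF X M n3] by blast
  obtain b where cX: "carrier X = XC b n" using X_props(5)[OF X] by blast
  have xM: "x \<in> M" "y \<in> M" using xy(3) generate.incl[of _ "{x,y}" X] by auto
  have xp: "x permutes {1..n}" "y permutes {1..n}" using xy(1,2) cX XC_perm by auto
  obtain a where a: "a \<in> B" using B(2) by blast
  define R where "R = {(u, v). v = x u \<or> v = y u}"
  define A where "A = {z. (a, z) \<in> R\<^sup>*}"
  have AB: "A \<subseteq> B"
  proof
    fix z assume "z \<in> A"
    hence "(a, z) \<in> R\<^sup>*" by (simp add: A_def)
    thus "z \<in> B"
    proof (induction rule: rtrancl_induct)
      case base thus ?case using a .
    next
      case (step u v)
      thus ?case using B(4) xM by (auto simp: R_def)
    qed
  qed
  have An: "A \<subseteq> {1..n}" using AB B(1) by blast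
  have aA: "a \<in> A" by (simp add: A_def)
  have "(z, x z) \<in> R" "(z, y z) \<in> R" for z by (simp_all add: R_def)
  hence "z \<in> A \<Longrightarrow> x z \<in> A \<and> y z \<in> A" for z unfolding A_def
    by (metis mem_Collect_eq rtrancl_into_rtrancl)
  hence xA: "x ` A \<subseteq> A" "y ` A \<subseteq> A" by auto
  have xA': "x ` A = A" "y ` A = A"
    using perm_compl_inv(1)[OF xp(1) An finite_atLeastAtMost xA(1)]
      perm_compl_inv(1)[OF xp(2) An finite_atLeastAtMost xA(2)] by auto
  have fB: "finite B" using B(1) finite_subset by blast
  have cA: "card A \<le> card B" using AB fB card_mono by blast
  have nf: "\<not> (\<forall>a\<in>A. x a = a \<and> y a = a)" if "2 \<le> card A"
  proof
    assume fx: "\<forall>a\<in>A. x a = a \<and> y a = a"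
    have "A \<subseteq> {a}"
    proof
      fix z assume "z \<in> A"
      hence "(a, z) \<in> R\<^sup>*" by (simp add: A_def)
      thus "z \<in> {a}"
      proof (induction rule: rtrancl_induct)
        case base thus ?case by simp
      next
        case (step u v)
        thus ?case using fx aA by (auto simp: R_def)
      qed
    qed
    hence "card A \<le> card {a}" by (intro card_mono) auto
    hence "card A \<le> 1" by simp
    thus False using that by simp
  qed
  show ?thesis using An aA cA B(3) xA' nf by (intro exI[of _ A]) auto
qed





lemma frac_id:
  fixes a b c d e f g :: real
  assumes "a \<noteq> 0" "b \<noteq> 0" "c \<noteq> 0" "d \<noteq> 0" "e \<noteq> 0" "f \<noteq> 0"
  shows "(3/2)/(a*b) + 6/(a*b*c) + 24/(a*b*c*d) + 120/(a*b*c*d*e) + g*360/(a*b*c*d*e*f)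
    = ((3/2)*a*c*d*e*f + 6*a*d*e*f + 24*a*e*f + 120*a*f + 360*a*g) / (a^2 * (b*c*d*e*f))"
  using assms by (simp add: field_simps power2_eq_square)

lemma numeric:
  fixes t :: real assumes t: "t \<ge> 0"
  shows "(3/2)/((t+14)*(t+13)) + 6/((t+14)*(t+13)*(t+12)) + 24/((t+14)*(t+13)*(t+12)*(t+11))
     + 120/((t+14)*(t+13)*(t+12)*(t+11)*(t+10)) + (t+3)*360/((t+14)*(t+13)*(t+12)*(t+11)*(t+10)*(t+9))
     < 27/10/(t+14)^2"
proof -
  have pos: "(t+14) > 0" "(t+13) > 0" "t+12 > 0" "t+11>0" "t+10>0" "t+9>0" using t by auto
  have key: "27/10 * ((t+13)*(t+12)*(t+11)*(t+10)*(t+9)) - ((3/2)*(t+14)*(t+12)*(t+11)*(t+10)*(t+9) + 6*(t+14)*(t+11)*(t+10)*(t+9) + 24*(t+14)*(t+10)*(t+9) + 120*(t+14)*(t+9) + 360*(t+14)*(t+3))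
     = 23868 + 303258/10 * t + 91995/10 * t^2 + 1095 * t^3 + 585/10*t^4 + 12/10 * t^5"
    by algebra
  have ppos: "23868 + 303258/10 * t + 91995/10 * t^2 + 1095 * t^3 + 585/10*t^4 + 12/10 * t^5 > 0"
    using t by (simp add: add_pos_nonneg)
  define D where "D = (t+13)*(t+12)*(t+11)*(t+10)*(t+9)"
  define Nm where "Nm = (3/2)*(t+14)*(t+12)*(t+11)*(t+10)*(t+9) + 6*(t+14)*(t+11)*(t+10)*(t+9) + 24*(t+14)*(t+10)*(t+9) + 120*(t+14)*(t+9) + 360*(t+14)*(t+3)"
  have Dp: "D > 0" using pos by (simp add: D_def)
  have lt: "Nm < 27/10 * D" using key ppos unfolding D_def Nm_def by linarith
  have eq: "(3/2)/((t+14)*(t+13)) + 6/((t+14)*(t+13)*(t+12)) + 24/((t+14)*(t+13)*(t+12)*(t+11))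
     + 120/((t+14)*(t+13)*(t+12)*(t+11)*(t+10)) + (t+3)*360/((t+14)*(t+13)*(t+12)*(t+11)*(t+10)*(t+9))
     = Nm / ((t+14)^2 * D)"
    unfolding Nm_def D_def by (rule frac_id) (use pos in auto)
  have "Nm / ((t+14)^2 * D) < (27/10 * D) / ((t+14)^2 * D)"
    using lt Dp pos by (intro divide_strict_right_mono) auto
  also have "\<dots> = 27/10/(t+14)^2" using Dp by simp
  finally show ?thesis using eq by simp
qed

lemma aux_eq:
  fixes a b c d e f g :: real
  shows "(3/4)/(a*b/2) + 1/(a*b*c/6) + 1/(a*b*c*d/24) + 1/(a*b*c*d*e/120) + (g/2)/(a*b*c*d*e*f/720)
    = (3/2)/(a*b) + 6/(a*b*c) + 24/(a*b*c*d) + 120/(a*b*c*d*e) + g*360/(a*b*c*d*e*f)"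
  by (simp add: field_simps)

lemma ch: 
  assumes "n \<ge> 6"
  shows "real (n choose 2) = real n*(real n-1)/2"
    "real (n choose 3) = real n*(real n-1)*(real n-2)/6"
    "real (n choose 4) = real n*(real n-1)*(real n-2)*(real n-3)/24"
    "real (n choose 5) = real n*(real n-1)*(real n-2)*(real n-3)*(real n-4)/120"
    "real (n choose 6) = real n*(real n-1)*(real n-2)*(real n -3)*(real n-4)*(real n-5)/720"
  using assms
  by (simp_all add: binomial_altdef_of_nat prod.atLeast0_lessThan_Suc of_nat_diff numeral_eq_Suc field_simps)

lemma final_bound:
  assumes n: "n \<ge> 14"
  shows "(3/4)/real (n choose 2) + (\<Sum>k\<in>{3..(n-1) div 2}. 1/real (n choose k)) < 27/10/(real n)^2"
proof -
  define K where "K = (n-1) div 2"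
  have K6: "K \<ge> 6" using n unfolding K_def by linarith
  have K2: "2 * K \<le> n" unfolding K_def by linarith
  have set: "{3..K} = {3,4,5} \<union> {6..K}" using K6 by auto
  have C6p: "real (n choose 6) > 0" using n by simp
  have tail: "(\<Sum>k\<in>{6..K}. 1/real (n choose k)) \<le> (\<Sum>k\<in>{6..K}. 1/real (n choose 6))"
  proof (rule sum_mono)
    fix k assume k: "k \<in> {6..K}"
    hence "n choose 6 \<le> n choose k" using K2 by (intro binomial_mono) auto
    hence "real (n choose 6) \<le> real (n choose k)" by simp
    thus "1/real (n choose k) \<le> 1/real (n choose 6)" using C6p by (simp add: frac_le)
  qed
  have c1: "card {6..K} = K - 5" by simp
  have c2: "2*(K-5) + 11 \<le> n" using K6 n unfolding K_def by linarith
  hence "2 * real (K-5) + 11 \<le> real n" by linarith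
  hence cK: "real (card {6..K}) \<le> (real n - 11)/2" using c1 by simp
  have "(\<Sum>k\<in>{6..K}. 1/real (n choose 6)) = real (card {6..K}) / real (n choose 6)" by simp
  also have "\<dots> \<le> ((real n - 11)/2) / real (n choose 6)" using cK C6p by (intro divide_right_mono) auto
  finally have tail2: "(\<Sum>k\<in>{6..K}. 1/real (n choose k)) \<le> ((real n - 11)/2) / real (n choose 6)" using tail by linarith
  have "(\<Sum>k\<in>{3..K}. 1/real (n choose k)) = (\<Sum>k\<in>{3,4,5}. 1/real (n choose k)) + (\<Sum>k\<in>{6..K}. 1/real (n choose k))"
    unfolding set by (rule sum.union_disjoint) auto
  also have "(\<Sum>k\<in>{3,4,5}. 1/real (n choose k)) = 1/real (n choose 3) + 1/real (n choose 4) + 1/real (n choose 5)" by simp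
  finally have split: "(\<Sum>k\<in>{3..K}. 1/real (n choose k)) \<le> 1/real (n choose 3) + 1/real (n choose 4) + 1/real (n choose 5) + ((real n - 11)/2) / real (n choose 6)"
    using tail2 by linarith
  define t where "t = real n - 14"
  have t0: "t \<ge> 0" using n by (simp add: t_def)
  have xn: "real n = t + 14" by (simp add: t_def)
  have n6: "n \<ge> 6" using n by simp
  have "(3/4)/real (n choose 2) + 1/real (n choose 3) + 1/real (n choose 4) + 1/real (n choose 5) + ((real n - 11)/2) / real (n choose 6)
      = (3/2)/((t+14)*(t+13)) + 6/((t+14)*(t+13)*(t+12)) + 24/((t+14)*(t+13)*(t+12)*(t+11))
     + 120/((t+14)*(t+13)*(t+12)*(t+11)*(t+10)) + (t+3)*360/((t+14)*(t+13)*(t+12)*(t+11)*(t+10)*(t+9))"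
  proof -
    have e: "real n - 1 = t+13" "real n - 2 = t+12" "real n - 3 = t+11" "real n - 4 = t+10"
      "real n - 5 = t+9" "real n - 11 = t+3" by (simp_all add: xn)
    show ?thesis unfolding ch[OF n6] unfolding e unfolding xn by (rule aux_eq)
  qed
  also have "\<dots> < 27/10/(t+14)^2" by (rule numeric[OF t0])
  also have "\<dots> = 27/10/(real n)^2" by (simp add: xn)
  finally show ?thesis using split unfolding K_def by linarith
qed

lemma finite_Stab: "finite (Stab b n A)"
  by (rule finite_subset[OF _ finite_permutations[of "{1..n}"]]) (auto simp: Stab_def XC_def)

lemma finite_Fixs: "finite (Fixs b n A)"
  by (rule finite_subset[OF _ finite_permutations[of "{1..n}"]]) (auto simp: Fixs_def XC_def)

lemma card_Stab_real:
  assumes "A \<subseteq> {1..n}" "card A = k" "k + 2 \<le> n"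
  shows "real (card (Stab b n A)) = real (card (XC b n)) / real (n choose k)"
proof -
  have "real (n choose k) > 0" using assms(3) by simp
  thus ?thesis using stab_ratio[of A n b] assms by (simp add: field_simps)
qed

lemma card_K: "card {A. A \<subseteq> {1..n} \<and> card A = k} = n choose k"
  using n_subsets[of "{1..n::nat}" k] by simp

lemma sum_K:
  assumes "k + 2 \<le> n"
  shows "real (\<Sum>A\<in>{A. A \<subseteq> {1..n} \<and> card A = k}. card (Stab b n A \<times> Stab b n A))
     = real (card (XC b n))^2 / real (n choose k)"
proof -
  let ?N = "real (card (XC b n))" and ?C = "real (n choose k)"
  have Cp: "?C > 0" using assms by simp
  have "real (\<Sum>A\<in>{A. A \<subseteq> {1..n} \<and> card A = k}. card (Stab b n A \<times> Stab b n A))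
      = (\<Sum>A\<in>{A. A \<subseteq> {1..n} \<and> card A = k}. (?N / ?C)^2)"
    unfolding of_nat_sum
  proof (rule sum.cong)
    fix A assume "A \<in> {A. A \<subseteq> {1..n} \<and> card A = k}"
    hence "real (card (Stab b n A)) = ?N / ?C" using card_Stab_real assms by auto
    thus "real (card (Stab b n A \<times> Stab b n A)) = (?N / ?C)^2"
      by (simp add: card_cartesian_product power2_eq_square)
  qed simp
  also have "\<dots> = ?C * (?N / ?C)^2" using card_K[of n k] by simp
  also have "\<dots> = ?N^2 / ?C" using Cp by (simp add: power2_eq_square field_simps)
  finally show ?thesis .
qed

lemma sum_K2:
  assumes "4 \<le> n"
  shows "real (\<Sum>A\<in>{A. A \<subseteq> {1..n} \<and> card A = 2}. card (Stab b n A \<times> Stab b n A - Fixs b n A \<times> Fixs b n A))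
     = (3/4) * real (card (XC b n))^2 / real (n choose 2)"
proof -
  let ?N = "real (card (XC b n))" and ?C = "real (n choose 2)"
  have Cp: "?C > 0" using assms by simp
  have "real (\<Sum>A\<in>{A. A \<subseteq> {1..n} \<and> card A = 2}. card (Stab b n A \<times> Stab b n A - Fixs b n A \<times> Fixs b n A))
      = (\<Sum>A\<in>{A. A \<subseteq> {1..n} \<and> card A = 2}. (3/4) * (?N / ?C)^2)"
    unfolding of_nat_sum
  proof (rule sum.cong)
    fix A assume A: "A \<in> {A. A \<subseteq> {1..n} \<and> card A = 2}"
    hence s: "real (card (Stab b n A)) = ?N / ?C" using card_Stab_real assms by auto
    obtain a1 a2 where a: "A = {a1, a2}" "a1 \<noteq> a2" using A by (auto simp: card_2_iff)
    have h: "card (Stab b n A) = 2 * card (Fixs b n A)" using fix_half[OF a] A assms by auto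
    have sub: "Fixs b n A \<times> Fixs b n A \<subseteq> Stab b n A \<times> Stab b n A"
      using a by (auto simp: Fixs_def Stab_def)
    have "card (Stab b n A \<times> Stab b n A - Fixs b n A \<times> Fixs b n A)
        = card (Stab b n A) * card (Stab b n A) - card (Fixs b n A) * card (Fixs b n A)"
      using card_Diff_subset[OF _ sub] finite_Fixs by (simp add: card_cartesian_product)
    also have "\<dots> = 3 * (card (Fixs b n A) * card (Fixs b n A))" using h by simp
    finally have "real (card (Stab b n A \<times> Stab b n A - Fixs b n A \<times> Fixs b n A))
       = 3 * (real (card (Fixs b n A)))^2" by (simp add: power2_eq_square)
    also have "real (card (Fixs b n A)) = real (card (Stab b n A)) / 2" using h by simp
    finally show "real (card (Stab b n A \<times> Stab b n A - Fixs b n A \<times> Fixs b n A)) = (3/4) * (?N / ?C)^2"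
      using s by (simp add: power2_eq_square)
  qed simp
  also have "\<dots> = ?C * ((3/4) * (?N / ?C)^2)" using card_K[of n 2] by simp
  also have "\<dots> = (3/4) * ?N^2 / ?C" using Cp by (simp add: power2_eq_square field_simps)
  finally show ?thesis .
qed




theorem lemma2p2:
  fixes n :: nat and X :: "(nat \<Rightarrow> nat) monoid"
  assumes "n \<ge> 14"
    and "X = alt_group n \<or> X = sym_group n"
  shows "p_intrans n X < 1 / real n + 2.7 / (real n)^2"
proof -
  note n = assms(1) and X = assms(2)
  obtain b where cX: "carrier X = XC b n" using X_props(5)[OF X] by blast
  define N where "N = card (XC b n)"
  define KK where "KK k = {A. A \<subseteq> {1..n} \<and> card A = k}" for k
  define Bad where "Bad = {(x, y). x \<in> carrier X \<and> y \<in> carrier X \<and>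
        (\<exists>M. maximal_subgroup X M \<and> intransitive n M \<and> generate X {x, y} \<subseteq> M)}"
  define U1 where "U1 = (\<Union>A\<in>KK 1. Stab b n A \<times> Stab b n A)"
  define U2 where "U2 = (\<Union>A\<in>KK 2. Stab b n A \<times> Stab b n A - Fixs b n A \<times> Fixs b n A)"
  define U3 where "U3 = (\<Union>k\<in>{3..(n-1) div 2}. \<Union>A\<in>KK k. Stab b n A \<times> Stab b n A)"
  have fKK: "finite (KK k)" for k
    by (rule finite_subset[of _ "Pow {1..n}"]) (auto simp: KK_def)
  have sub: "Bad \<subseteq> U1 \<union> U2 \<union> U3"
  proof
    fix p assume "p \<in> Bad"
    then obtain x y M where p: "p = (x, y)" and xy: "x \<in> carrier X" "y \<in> carrier X"
      and M: "maximal_subgroup X M" "intransitive n M" "generate X {x, y} \<subseteq> M"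
      unfolding Bad_def by blast
    obtain A where A: "A \<subseteq> {1..n}" "A \<noteq> {}" "2 * card A < n" "x ` A = A" "y ` A = A"
      "2 \<le> card A \<longrightarrow> \<not> (\<forall>a\<in>A. x a = a \<and> y a = a)"
      using orbit_set[OF X M(1,2) _ xy M(3)] n by auto
    have fA: "finite A" using A(1) finite_subset by blast
    hence k1: "card A \<ge> 1" using A(2) by (simp add: Suc_le_eq card_gt_0_iff)
    have xS: "x \<in> Stab b n A" "y \<in> Stab b n A" using xy A(4,5) cX by (auto simp: Stab_def)
    consider "card A = 1" | "card A = 2" | "card A \<ge> 3" using k1 by linarith
    thus "p \<in> U1 \<union> U2 \<union> U3"
    proof cases
      case 1
      hence "A \<in> KK 1" using A(1) by (simp add: KK_def)
      thus ?thesis using xS p unfolding U1_def by blast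
    next
      case 2
      hence "A \<in> KK 2" using A(1) by (simp add: KK_def)
      moreover have "\<not> (x \<in> Fixs b n A \<and> y \<in> Fixs b n A)" using A(6) 2 by (auto simp: Fixs_def)
      ultimately show ?thesis using xS p unfolding U2_def by blast
    next
      case 3
      hence "card A \<in> {3..(n-1) div 2}" using A(3) by auto
      moreover have "A \<in> KK (card A)" using A(1) by (simp add: KK_def)
      ultimately show ?thesis using xS p unfolding U3_def by blast
    qed
  qed
  have fS: "finite (Stab b n A \<times> Stab b n A)" for A using finite_Stab by blast
  have fU1: "finite U1" unfolding U1_def using fKK fS by blast
  have fU2: "finite U2" unfolding U2_def using fKK fS by blast
  have fU3: "finite U3" unfolding U3_def using fKK fS by blast
  have "card Bad \<le> card (U1 \<union> U2 \<union> U3)" using sub fU1 fU2 fU3 by (intro card_mono) auto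
  also have "\<dots> \<le> card (U1 \<union> U2) + card U3" by (rule card_Un_le)
  also have "\<dots> \<le> card U1 + card U2 + card U3" using card_Un_le[of U1 U2] by simp
  finally have cB: "card Bad \<le> card U1 + card U2 + card U3" .
  have c1: "real (card U1) \<le> real N^2 / real n"
  proof -
    have "card U1 \<le> (\<Sum>A\<in>KK 1. card (Stab b n A \<times> Stab b n A))"
      unfolding U1_def by (rule card_UN_le[OF fKK])
    hence "real (card U1) \<le> real (\<Sum>A\<in>KK 1. card (Stab b n A \<times> Stab b n A))" by linarith
    also have "\<dots> = real N^2 / real (n choose 1)" unfolding KK_def N_def using n by (intro sum_K) auto
    finally show ?thesis by simp
  qed
  have c2: "real (card U2) \<le> (3/4) * real N^2 / real (n choose 2)"
  proof -
    have "card U2 \<le> (\<Sum>A\<in>KK 2. card (Stab b n A \<times> Stab b n A - Fixs b n A \<times> Fixs b n A))"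
      unfolding U2_def by (rule card_UN_le[OF fKK])
    hence "real (card U2) \<le> real (\<Sum>A\<in>KK 2. card (Stab b n A \<times> Stab b n A - Fixs b n A \<times> Fixs b n A))" by linarith
    also have "\<dots> = (3/4) * real N^2 / real (n choose 2)" unfolding KK_def N_def using n by (intro sum_K2) auto
    finally show ?thesis .
  qed
  have c3: "real (card U3) \<le> real N^2 * (\<Sum>k\<in>{3..(n-1) div 2}. 1 / real (n choose k))"
  proof -
    have "card U3 \<le> (\<Sum>k\<in>{3..(n-1) div 2}. card (\<Union>A\<in>KK k. Stab b n A \<times> Stab b n A))"
      unfolding U3_def by (rule card_UN_le) simp
    also have "\<dots> \<le> (\<Sum>k\<in>{3..(n-1) div 2}. \<Sum>A\<in>KK k. card (Stab b n A \<times> Stab b n A))"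
      by (intro sum_mono card_UN_le[OF fKK])
    finally have "real (card U3) \<le> (\<Sum>k\<in>{3..(n-1) div 2}. real (\<Sum>A\<in>KK k. card (Stab b n A \<times> Stab b n A)))"
      unfolding of_nat_sum[symmetric] by linarith
    also have "\<dots> = (\<Sum>k\<in>{3..(n-1) div 2}. real N^2 * (1 / real (n choose k)))"
    proof (rule sum.cong)
      fix k assume k: "k \<in> {3..(n-1) div 2}"
      hence "k + 2 \<le> n" by auto
      thus "real (\<Sum>A\<in>KK k. card (Stab b n A \<times> Stab b n A)) = real N^2 * (1 / real (n choose k))"
        unfolding KK_def N_def using sum_K by simp
    qed simp
    finally show ?thesis by (simp add: sum_distrib_left)
  qed
  have Np: "real N > 0"
  proof -
    have "id \<in> XC b n" by (simp add: XC_def permutes_id)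
    moreover have "finite (XC b n)"
      by (rule finite_subset[OF _ finite_permutations[of "{1..n}"]]) (auto simp: XC_def)
    ultimately show ?thesis unfolding N_def by (simp add: card_gt_0_iff) blast
  qed
  have n1: "real (n choose 1) = real n" by simp
  have fb: "(3/4)/real (n choose 2) + (\<Sum>k\<in>{3..(n-1) div 2}. 1/real (n choose k)) < 27/10/(real n)^2"
    using final_bound[OF n] .
  have "real (card Bad) \<le> real N^2 * (1/real n + ((3/4)/real (n choose 2) + (\<Sum>k\<in>{3..(n-1) div 2}. 1/real (n choose k))))"
    using cB c1 c2 c3 by (simp add: field_simps)
  also have "\<dots> < real N^2 * (1/real n + 27/10/(real n)^2)"
    using fb Np by (intro mult_strict_left_mono) auto
  finally have "real (card Bad) / real N^2 < 1/real n + 27/10/(real n)^2"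
    using Np by (simp add: field_simps)
  moreover have "p_intrans n X = real (card Bad) / real N^2"
    unfolding p_intrans_def Bad_def N_def cX ..
  ultimately show ?thesis by simp
qed


end
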